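(* Every tree is complement critical. Every tree which is not a star is vector critical.
   Context: All graphs are finite and simple with nonempty vertex set; $\overline{G}$ denotes the complement of $G$. A star is a graph $K_{1,m}$. An orthogonal vector representation of a graph $G=(V,E)$ in $\mathbb{R}^d$ is a map $\phi:V\to\mathbb{R}^d$ with $\phi(v)\neq 0$ for all $v$, and for distinct $u,v$: $\langle\phi(u),\phi(v)\rangle=0$ if and only if $uv\notin E$. ${\rm mvr}(G)$ is the smallest $d$ for which such a representation exists. $G$ is vector critical if ${\rm mvr}(H)<{\rm mvr}(G)$ for every proper induced subgraph $H$ of $G$ (with nonempty vertex set). $G$ is complement critical if ${\rm mvr}(H)+{\rm mvr}(\overline{H})<{\rm mvr}(G)+{\rm mvr}(\overline{G})$ for every proper induced subgraph $H$ of $G$ (with nonempty vertex set). *)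

theory Defs
  imports Complex_Main
begin

definition graph :: "'a set \<Rightarrow> 'a set set \<Rightarrow> bool" where
  "graph V E \<longleftrightarrow> finite V \<and> V \<noteq> {} \<and>
     E \<subseteq> {{u, v} | u v. u \<in> V \<and> v \<in> V \<and> u \<noteq> v}"

definition complement_edges :: "'a set \<Rightarrow> 'a set set \<Rightarrow> 'a set set" where
  "complement_edges V E = {{u, v} | u v. u \<in> V \<and> v \<in> V \<and> u \<noteq> v \<and> {u, v} \<notin> E}"

definition induced_edges :: "'a set set \<Rightarrow> 'a set \<Rightarrow> 'a set set" where
  "induced_edges E S = {e \<in> E. e \<subseteq> S}"

text \<open>Vectors of R^d are represented as functions nat => real, only coordinates i < d matter.\<close>
definition orth_rep :: "'a set \<Rightarrow> 'a set set \<Rightarrow> nat \<Rightarrow> ('a \<Rightarrow> nat \<Rightarrow> real) \<Rightarrow> bool" where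
  "orth_rep V E d \<phi> \<longleftrightarrow>
     (\<forall>v\<in>V. \<exists>i<d. \<phi> v i \<noteq> 0) \<and>
     (\<forall>u\<in>V. \<forall>v\<in>V. u \<noteq> v \<longrightarrow>
        ((\<Sum>i<d. \<phi> u i * \<phi> v i) = 0 \<longleftrightarrow> {u, v} \<notin> E))"

definition mvr :: "'a set \<Rightarrow> 'a set set \<Rightarrow> nat" where
  "mvr V E = (LEAST d. \<exists>\<phi>. orth_rep V E d \<phi>)"

definition vector_critical :: "'a set \<Rightarrow> 'a set set \<Rightarrow> bool" where
  "vector_critical V E \<longleftrightarrow>
     (\<forall>S. S \<subset> V \<and> S \<noteq> {} \<longrightarrow> mvr S (induced_edges E S) < mvr V E)"

definition complement_critical :: "'a set \<Rightarrow> 'a set set \<Rightarrow> bool" where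
  "complement_critical V E \<longleftrightarrow>
     (\<forall>S. S \<subset> V \<and> S \<noteq> {} \<longrightarrow>
        mvr S (induced_edges E S) + mvr S (complement_edges S (induced_edges E S))
          < mvr V E + mvr V (complement_edges V E))"

definition walk :: "'a set \<Rightarrow> 'a set set \<Rightarrow> 'a list \<Rightarrow> bool" where
  "walk V E p \<longleftrightarrow> p \<noteq> [] \<and> set p \<subseteq> V \<and>
     (\<forall>i. Suc i < length p \<longrightarrow> {p ! i, p ! Suc i} \<in> E)"

definition connected_graph :: "'a set \<Rightarrow> 'a set set \<Rightarrow> bool" where
  "connected_graph V E \<longleftrightarrow>
     (\<forall>u\<in>V. \<forall>v\<in>V. \<exists>p. walk V E p \<and> hd p = u \<and> last p = v)"

definition is_cycle :: "'a set \<Rightarrow> 'a set set \<Rightarrow> 'a list \<Rightarrow> bool" where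
  "is_cycle V E c \<longleftrightarrow> length c \<ge> 3 \<and> distinct c \<and> walk V E c \<and> {last c, hd c} \<in> E"

definition is_tree :: "'a set \<Rightarrow> 'a set set \<Rightarrow> bool" where
  "is_tree V E \<longleftrightarrow> graph V E \<and> connected_graph V E \<and> \<not> (\<exists>c. is_cycle V E c)"

definition is_star :: "'a set \<Rightarrow> 'a set set \<Rightarrow> bool" where
  "is_star V E \<longleftrightarrow> graph V E \<and> (\<exists>c\<in>V. E = {{c, v} | v. v \<in> V \<and> v \<noteq> c})"

end

theory Submission
  imports Defs "HOL-Library.Function_Algebras"
begin


definition fscale :: "real \<Rightarrow> ('b \<Rightarrow> real) \<Rightarrow> ('b \<Rightarrow> real)" where
  "fscale a f = (\<lambda>x. a * f x)"

interpretation fvs: vector_space fscale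
  by unfold_locales (auto simp: fscale_def fun_eq_iff algebra_simps)

lemma sum_fun_apply: "(\<Sum>i\<in>I. (f i :: 'b \<Rightarrow> real)) x = (\<Sum>i\<in>I. f i x)"
  by (induction I rule: infinite_finite_induct) auto

lemma indep_bound:
  fixes w :: "'i \<Rightarrow> ('b \<Rightarrow> real)"
  assumes fI: "finite I" and fB: "finite B"
    and sp: "\<And>i. i \<in> I \<Longrightarrow> w i \<in> fvs.span B"
    and ind: "\<And>c. (\<Sum>i\<in>I. fscale (c i) (w i)) = 0 \<Longrightarrow> \<forall>i\<in>I. c i = 0"
  shows "card I \<le> card B"
proof -
  have inj: "inj_on w I"
  proof (rule inj_onI, rule ccontr)
    fix i j assume ij: "i \<in> I" "j \<in> I" "w i = w j" "i \<noteq> j"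
    define c where "c = (\<lambda>k. if k = i then (1::real) else if k = j then -1 else 0)"
    have "(\<Sum>k\<in>I. fscale (c k) (w k)) = (\<Sum>k\<in>{i,j}. fscale (c k) (w k))"
      by (rule sum.mono_neutral_right) (use ij fI in \<open>auto simp: c_def fscale_def fun_eq_iff\<close>)
    also have "\<dots> = 0" using ij by (auto simp: c_def fscale_def fun_eq_iff)
    finally have "\<forall>k\<in>I. c k = 0" by (rule ind)
    with ij show False by (auto simp: c_def)
  qed
  have "fvs.independent (w ` I)"
  proof (rule fvs.independent_if_scalars_zero)
    show "finite (w ` I)" using fI by simp
    fix c' x assume h: "(\<Sum>v\<in>w ` I. fscale (c' v) v) = 0" "x \<in> w ` I"
    have "(\<Sum>i\<in>I. fscale ((c' \<circ> w) i) (w i)) = (\<Sum>v\<in>w ` I. fscale (c' v) v)"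
      by (simp add: sum.reindex[OF inj])
    with h(1) have "\<forall>i\<in>I. (c' \<circ> w) i = 0" using ind by metis
    with h(2) show "c' x = 0" by auto
  qed
  moreover have "w ` I \<subseteq> fvs.span B" using sp by auto
  ultimately have "card (w ` I) \<le> card B" using fvs.independent_span_bound[OF fB] by blast
  thus ?thesis using card_image[OF inj] by simp
qed


lemma walk_single[simp]: "walk V E [x] \<longleftrightarrow> x \<in> V"
  by (auto simp: walk_def)

lemma walk_Cons2: "walk V E (x # y # ys) \<longleftrightarrow> x \<in> V \<and> {x, y} \<in> E \<and> walk V E (y # ys)"
  (is "?l \<longleftrightarrow> ?r")
proof
  assume l: ?l
  show ?r
  proof (intro conjI)
    show "x \<in> V" using l by (auto simp: walk_def)
    show "{x, y} \<in> E" using l unfolding walk_def by (metis nth_Cons_0 nth_Cons_Suc length_Cons zero_less_Suc Suc_less_eq)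
    show "walk V E (y # ys)" unfolding walk_def
    proof (intro conjI allI impI)
      show "set (y # ys) \<subseteq> V" using l by (auto simp: walk_def)
      fix i assume "Suc i < length (y # ys)"
      hence "Suc (Suc i) < length (x # y # ys)" by simp
      hence "{(x # y # ys) ! Suc i, (x # y # ys) ! Suc (Suc i)} \<in> E" using l unfolding walk_def by blast
      thus "{(y # ys) ! i, (y # ys) ! Suc i} \<in> E" by simp
    qed simp
  qed
next
  assume r: ?r
  show ?l unfolding walk_def
  proof (intro conjI allI impI)
    show "x # y # ys \<noteq> []" by simp
    show "set (x # y # ys) \<subseteq> V" using r by (auto simp: walk_def)
    fix i assume "Suc i < length (x # y # ys)"
    then show "{(x # y # ys) ! i, (x # y # ys) ! Suc i} \<in> E"
      using r by (cases i) (auto simp: walk_def)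
  qed
qed

lemma walk_Cons_walk: "walk V E (x # xs) \<Longrightarrow> xs \<noteq> [] \<Longrightarrow> walk V E xs"
  by (cases xs) (auto simp: walk_Cons2)

lemma walk_mono: "walk V E p \<Longrightarrow> V \<subseteq> V' \<Longrightarrow> E \<subseteq> E' \<Longrightarrow> walk V' E' p"
  by (auto simp: walk_def)

lemma walk_drop: "walk V E p \<Longrightarrow> k < length p \<Longrightarrow> walk V E (drop k p)"
  unfolding walk_def by (auto dest: in_set_dropD)

lemma walk_snoc: "walk V E p \<Longrightarrow> w \<in> V \<Longrightarrow> {last p, w} \<in> E \<Longrightarrow> walk V E (p @ [w])"
  unfolding walk_def
proof (intro conjI allI impI)
  fix i assume h: "p \<noteq> [] \<and> set p \<subseteq> V \<and> (\<forall>i. Suc i < length p \<longrightarrow> {p ! i, p ! Suc i} \<in> E)"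
    "w \<in> V" "{last p, w} \<in> E" "Suc i < length (p @ [w])"
  show "{(p @ [w]) ! i, (p @ [w]) ! Suc i} \<in> E"
  proof (cases "Suc i < length p")
    case True thus ?thesis using h by (auto simp: nth_append)
  next
    case False
    hence "Suc i = length p" using h by simp
    hence "i = length p - 1" by simp
    thus ?thesis using h by (auto simp: nth_append last_conv_nth)
  qed
qed auto

lemma walk_closed:
  assumes "walk V E q" "hd q \<in> A" "\<And>x y. x \<in> A \<Longrightarrow> {x, y} \<in> E \<Longrightarrow> y \<in> A"
  shows "last q \<in> A"
  using assms
proof (induction q rule: induct_list012)
  case (3 x y zs)
  then show ?case by (auto simp: walk_Cons2)
qed (auto simp: walk_def)

lemma walk_distinct:
  assumes "walk V E p"
  shows "\<exists>p'. walk V E p' \<and> distinct p' \<and> hd p' = hd p \<and> last p' = last p \<and> set p' \<subseteq> set p"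
  using assms
proof (induction p)
  case Nil thus ?case by (simp add: walk_def)
next
  case (Cons x xs)
  show ?case
  proof (cases "xs = []")
    case True thus ?thesis using Cons.prems by (intro exI[of _ "[x]"]) (simp add: walk_def)
  next
    case False
    have wx: "walk V E xs" using walk_Cons_walk[OF Cons.prems False] .
    obtain p' where p': "walk V E p'" "distinct p'" "hd p' = hd xs" "last p' = last xs" "set p' \<subseteq> set xs"
      using Cons.IH[OF wx] by blast
    have p'ne: "p' \<noteq> []" using p'(1) by (simp add: walk_def)
    show ?thesis
    proof (cases "x \<in> set p'")
      case True
      then obtain k where k: "k < length p'" "p' ! k = x" by (auto simp: in_set_conv_nth)
      have "walk V E (drop k p')" using walk_drop[OF p'(1) k(1)] .
      moreover have "distinct (drop k p')" using p'(2) by simp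
      moreover have "hd (drop k p') = hd (x # xs)" using k by (simp add: hd_drop_conv_nth)
      moreover have "last (drop k p') = last (x # xs)" using k p'(4) False by simp
      moreover have "set (drop k p') \<subseteq> set (x # xs)" using p'(5) set_drop_subset by fastforce
      ultimately show ?thesis by blast
    next
      case f: False
      obtain y ys where xs: "xs = y # ys" using False by (cases xs) auto
      obtain z zs where pz: "p' = z # zs" using p'ne by (cases p') auto
      have "x \<in> V" using Cons.prems by (auto simp: walk_def)
      moreover have "{x, y} \<in> E" using Cons.prems xs by (simp add: walk_Cons2)
      ultimately have "walk V E (x # p')" using p' pz xs by (simp add: walk_Cons2)
      thus ?thesis using p' f pz xs by (intro exI[of _ "x # p'"]) auto
    qed
  qed
qed

lemma graph_edge: "graph V E \<Longrightarrow> {x, y} \<in> E \<Longrightarrow> x \<in> V \<and> y \<in> V \<and> x \<noteq> y"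
  unfolding graph_def by (auto simp: doubleton_eq_iff)

lemma graph_edge2: "graph V E \<Longrightarrow> e \<in> E \<Longrightarrow> \<exists>x y. e = {x, y} \<and> x \<in> V \<and> y \<in> V \<and> x \<noteq> y"
  unfolding graph_def by auto

lemma graph_finite_E: "graph V E \<Longrightarrow> finite E"
proof -
  assume g: "graph V E"
  have "E \<subseteq> (\<lambda>(u, v). {u, v}) ` (V \<times> V)" using g unfolding graph_def by auto
  moreover have "finite (V \<times> V)" using g by (simp add: graph_def)
  ultimately show ?thesis by (meson finite_imageI finite_subset)
qed


lemma triple_swap:
  "(\<Sum>i\<in>I. (\<Sum>u\<in>A. f u i) * (\<Sum>w\<in>B. g w i)) = (\<Sum>u\<in>A. \<Sum>w\<in>B. \<Sum>i\<in>I. f u i * (g w i :: real))"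
proof -
  have "(\<Sum>i\<in>I. (\<Sum>u\<in>A. f u i) * (\<Sum>w\<in>B. g w i)) = (\<Sum>i\<in>I. \<Sum>u\<in>A. \<Sum>w\<in>B. f u i * g w i)"
    by (simp add: sum_product)
  also have "\<dots> = (\<Sum>u\<in>A. \<Sum>i\<in>I. \<Sum>w\<in>B. f u i * g w i)" by (rule sum.swap)
  also have "\<dots> = (\<Sum>u\<in>A. \<Sum>w\<in>B. \<Sum>i\<in>I. f u i * g w i)" by (simp add: sum.swap[of _ I])
  finally show ?thesis .
qed

lemma full_support:
  assumes tree: "is_tree V E" and rep: "orth_rep V E d \<phi>"
    and z0: "z0 \<in> V" "c z0 = 0"
    and sum0: "\<And>i. i < d \<Longrightarrow> (\<Sum>v\<in>V. c v * \<phi> v i) = 0"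
  shows "\<forall>v\<in>V. c v = 0"
proof (rule ccontr)
  assume "\<not> (\<forall>v\<in>V. c v = 0)"
  then obtain p0 where p0: "p0 \<in> V" "c p0 \<noteq> 0" by blast
  have g: "graph V E" and con: "connected_graph V E" and nocyc: "\<not> (\<exists>c. is_cycle V E c)"
    using tree by (auto simp: is_tree_def)
  have fV: "finite V" using g by (simp add: graph_def)
  obtain q0 where q0: "walk V E q0" "hd q0 = z0" "last q0 = p0"
    using con z0 p0 unfolding connected_graph_def by blast
  have "\<not> (\<forall>x y. c x = 0 \<longrightarrow> {x, y} \<in> E \<longrightarrow> c y = 0)"
  proof
    assume "\<forall>x y. c x = 0 \<longrightarrow> {x, y} \<in> E \<longrightarrow> c y = 0"
    hence "last q0 \<in> {x. c x = 0}" using walk_closed[OF q0(1), of "{x. c x = 0}"] q0(2) z0 by auto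
    thus False using q0(3) p0 by simp
  qed
  then obtain z p where zp: "c z = 0" "{z, p} \<in> E" "c p \<noteq> 0" by blast
  have zpV: "z \<in> V" "p \<in> V" "z \<noteq> p" using graph_edge[OF g zp(2)] by auto
  define W where "W = V - {z}"
  define C where "C = {u. \<exists>q. walk W E q \<and> hd q = p \<and> last q = u}"
  define R where "R = W - C"
  have CW: "C \<subseteq> W" unfolding C_def walk_def by (auto simp: last_in_set)
  have pC: "p \<in> C" unfolding C_def using zpV by (intro CollectI exI[of _ "[p]"]) (auto simp: W_def)
  have a: "{u, w} \<notin> E" if uC: "u \<in> C" and wR: "w \<in> R" for u w
  proof
    assume e: "{u, w} \<in> E"
    obtain q where q: "walk W E q" "hd q = p" "last q = u" using uC unfolding C_def by blast
    have "w \<in> W" using wR by (simp add: R_def)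
    hence "walk W E (q @ [w])" using walk_snoc[OF q(1)] q(3) e by simp
    moreover have "q \<noteq> []" using q(1) by (simp add: walk_def)
    ultimately have "w \<in> C" unfolding C_def using q(2) by (intro CollectI exI[of _ "q @ [w]"]) auto
    thus False using wR by (simp add: R_def)
  qed
  have b: "v = p" if vC: "v \<in> C" and zv: "{z, v} \<in> E" for v
  proof (rule ccontr)
    assume vp: "v \<noteq> p"
    obtain q where q: "walk W E q" "hd q = p" "last q = v" using vC unfolding C_def by blast
    obtain p' where p': "walk W E p'" "distinct p'" "hd p' = p" "last p' = v" "set p' \<subseteq> set q"
      using walk_distinct[OF q(1)] q by auto
    obtain a rest where pr: "p' = a # rest" using p'(1) by (cases p') (auto simp: walk_def)
    have "rest \<noteq> []" using pr p'(3,4) vp by auto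
    hence len: "length (z # p') \<ge> 3" using pr by (cases rest) auto
    have zn: "z \<notin> set p'" using p'(1) by (auto simp: walk_def W_def)
    have wV: "walk V E p'" using walk_mono[OF p'(1)] by (auto simp: W_def)
    have "walk V E (z # p')" using wV pr p'(3) zpV zp(2) by (simp add: walk_Cons2)
    moreover have "{last (z # p'), hd (z # p')} \<in> E" using p'(4) pr zv by (simp add: insert_commute)
    ultimately have "is_cycle V E (z # p')" using len zn p'(2) by (simp add: is_cycle_def)
    thus False using nocyc by blast
  qed
  define ip where "ip x y = (\<Sum>i<d. \<phi> x i * \<phi> y i)" for x y
  have ip0: "ip u w = 0 \<longleftrightarrow> {u, w} \<notin> E" if "u \<in> V" "w \<in> V" "u \<noteq> w" for u w
    using rep that unfolding orth_rep_def ip_def by blast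
  define X where "X i = (\<Sum>v\<in>C. c v * \<phi> v i)" for i
  define Y where "Y i = (\<Sum>v\<in>R. c v * \<phi> v i)" for i
  have fC: "finite C" using CW fV by (auto simp: W_def intro: finite_subset)
  have fR: "finite R" using fV by (auto simp: R_def W_def)
  have Vdec: "V = insert z (C \<union> R)" using CW zpV by (auto simp: R_def W_def)
  have XY: "X i + Y i = 0" if "i < d" for i
  proof -
    have "C \<inter> R = {}" by (auto simp: R_def)
    moreover have "z \<notin> C \<union> R" using CW by (auto simp: R_def W_def)
    ultimately have "(\<Sum>v\<in>V. c v * \<phi> v i) = c z * \<phi> z i + (X i + Y i)"
      unfolding Vdec X_def Y_def using fC fR by (simp add: sum.union_disjoint)
    thus ?thesis using sum0[OF that] zp(1) by simp
  qed
  have "(\<Sum>i<d. X i * Y i) = (\<Sum>u\<in>C. \<Sum>w\<in>R. c u * c w * ip u w)"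
    unfolding X_def Y_def ip_def triple_swap by (simp add: sum_distrib_left mult_ac)
  also have "\<dots> = 0"
  proof (intro sum.neutral ballI)
    fix u w assume uw: "u \<in> C" "w \<in> R"
    have "u \<in> V" "w \<in> V" "u \<noteq> w" using uw CW by (auto simp: R_def W_def)
    hence "ip u w = 0" using ip0 a[OF uw] by blast
    thus "c u * c w * ip u w = 0" by simp
  qed
  finally have "(\<Sum>i<d. X i * Y i) = 0" .
  moreover have "(\<Sum>i<d. X i * Y i) = - (\<Sum>i<d. X i * X i)"
  proof -
    have "Y i = - X i" if "i < d" for i using XY[OF that] by (simp add: eq_neg_iff_add_eq_0 add.commute)
    hence "(\<Sum>i<d. X i * Y i) = (\<Sum>i<d. - (X i * X i))" by (intro sum.cong) auto
    thus ?thesis by (simp add: sum_negf)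
  qed
  ultimately have "(\<Sum>i<d. X i * X i) = 0" by simp
  hence X0: "X i = 0" if "i < d" for i
    using that by (subst (asm) sum_nonneg_eq_0_iff) auto
  have "(\<Sum>i<d. \<phi> z i * X i) = (\<Sum>v\<in>C. c v * ip z v)"
    unfolding X_def ip_def sum_distrib_left by (subst sum.swap) (simp add: mult_ac)
  also have "\<dots> = c p * ip z p + (\<Sum>v\<in>C - {p}. c v * ip z v)"
    using sum.remove[OF fC pC] by simp
  also have "(\<Sum>v\<in>C - {p}. c v * ip z v) = 0"
  proof (intro sum.neutral ballI)
    fix v assume v: "v \<in> C - {p}"
    have "v \<in> V" "z \<noteq> v" using v CW by (auto simp: W_def)
    moreover have "{z, v} \<notin> E" using b v by blast
    ultimately have "ip z v = 0" using ip0 zpV by blast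
    thus "c v * ip z v = 0" by simp
  qed
  finally have "c p * ip z p = 0" using X0 by simp
  moreover have "ip z p \<noteq> 0" using ip0 zpV zp(2) by blast
  ultimately show False using zp(3) by simp
qed


lemma tree_lower:
  assumes tree: "is_tree V E" and rep: "orth_rep V E d \<phi>"
  shows "card V - 1 \<le> d"
proof -
  have g: "graph V E" using tree by (simp add: is_tree_def)
  have fV: "finite V" and ne: "V \<noteq> {}" using g by (auto simp: graph_def)
  obtain r where r: "r \<in> V" using ne by blast
  define I where "I = V - {r}"
  define w where "w v = (\<lambda>i::nat. if i < d then \<phi> v i else 0)" for v
  define \<delta> where "\<delta> j = (\<lambda>i::nat. if i = j then (1::real) else 0)" for j
  define B where "B = \<delta> ` {..<d}"
  have "card I \<le> card B"
  proof (rule indep_bound[of I B w])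
    show "finite I" using fV by (simp add: I_def)
    show "finite B" by (simp add: B_def)
    fix v assume "v \<in> I"
    have eq: "w v = (\<Sum>j<d. fscale (\<phi> v j) (\<delta> j))"
    proof
      fix i
      have "(\<Sum>j<d. fscale (\<phi> v j) (\<delta> j)) i = (\<Sum>j<d. (if i = j then \<phi> v j else 0))"
        by (simp add: sum_fun_apply fscale_def \<delta>_def if_distrib cong: if_cong)
      also have "\<dots> = w v i" by (simp add: w_def)
      finally show "w v i = (\<Sum>j<d. fscale (\<phi> v j) (\<delta> j)) i" by simp
    qed
    show "w v \<in> fvs.span B" unfolding eq
      by (intro fvs.span_sum fvs.span_scale fvs.span_base) (simp add: B_def)
  next
    fix c assume h: "(\<Sum>v\<in>I. fscale (c v) (w v)) = 0"
    define c' where "c' = c(r := 0)"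
    have s0: "(\<Sum>v\<in>V. c' v * \<phi> v i) = 0" if "i < d" for i
    proof -
      have "(\<Sum>v\<in>I. fscale (c v) (w v)) i = 0" using h by simp
      hence "(\<Sum>v\<in>I. c v * \<phi> v i) = 0" using that by (simp add: sum_fun_apply fscale_def w_def)
      moreover have "(\<Sum>v\<in>V. c' v * \<phi> v i) = c' r * \<phi> r i + (\<Sum>v\<in>I. c' v * \<phi> v i)"
        using sum.remove[OF fV r] unfolding I_def by simp
      moreover have "(\<Sum>v\<in>I. c' v * \<phi> v i) = (\<Sum>v\<in>I. c v * \<phi> v i)"
        by (intro sum.cong) (auto simp: c'_def I_def)
      ultimately show ?thesis by (simp add: c'_def)
    qed
    have "\<forall>v\<in>V. c' v = 0" by (rule full_support[OF tree rep r, of c']) (use s0 in \<open>auto simp: c'_def\<close>)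
    show "\<forall>v\<in>I. c v = 0"
    proof
      fix v assume v: "v \<in> I"
      hence "v \<in> V" "v \<noteq> r" by (auto simp: I_def)
      hence "c' v = 0" "c' v = c v" using \<open>\<forall>v\<in>V. c' v = 0\<close> by (auto simp: c'_def)
      thus "c v = 0" by simp
    qed
  qed
  moreover have "card B \<le> d" unfolding B_def using card_image_le[of "{..<d}" \<delta>] by simp
  moreover have "card I = card V - 1" using fV r by (simp add: I_def)
  ultimately show ?thesis by simp
qed

definition iso :: "'a set \<Rightarrow> 'a set set \<Rightarrow> 'a set" where
  "iso V E = {v \<in> V. \<forall>e\<in>E. v \<notin> e}"

lemma construct_rep:
  assumes fV: "finite V" and EV: "E \<subseteq> {{u, v} | u v. u \<in> V \<and> v \<in> V \<and> u \<noteq> v}"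
  shows "\<exists>\<phi>. orth_rep V E (card E + card (iso V E)) \<phi>"
proof -
  have fE: "finite E"
  proof -
    have "E \<subseteq> (\<lambda>(u, v). {u, v}) ` (V \<times> V)" using EV by auto
    thus ?thesis using fV by (meson finite_SigmaI finite_imageI finite_subset)
  qed
  define J where "J = E \<union> (\<lambda>v. {v}) ` iso V E"
  have fiso: "finite (iso V E)" using fV by (simp add: iso_def)
  have disj: "E \<inter> (\<lambda>v. {v}) ` iso V E = {}" using EV by auto
  have cJ: "card J = card E + card (iso V E)"
    unfolding J_def using fE fiso disj
    by (simp add: card_Un_disjoint card_image inj_on_def)
  have fJ: "finite J" using fE fiso by (simp add: J_def)
  obtain h where h: "bij_betw h {0..<card J} J" using ex_bij_betw_nat_finite[OF fJ] by blast
  define \<phi> where "\<phi> v i = (if v \<in> h i then (1::real) else 0)" for v i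
  have ipsum: "(\<Sum>i<card J. \<phi> u i * \<phi> v i) = (\<Sum>e\<in>J. if u \<in> e \<and> v \<in> e then 1 else 0)" for u v
  proof -
    have "(\<Sum>i<card J. \<phi> u i * \<phi> v i) = (\<Sum>i\<in>{0..<card J}. (\<lambda>e. if u \<in> e \<and> v \<in> e then (1::real) else 0) (h i))"
      by (intro sum.cong) (auto simp: \<phi>_def atLeast0LessThan)
    also have "\<dots> = (\<Sum>e\<in>J. if u \<in> e \<and> v \<in> e then 1 else 0)"
      using sum.reindex_bij_betw[OF h, of "\<lambda>e. if u \<in> e \<and> v \<in> e then (1::real) else 0"] by simp
    finally show ?thesis .
  qed
  have "orth_rep V E (card J) \<phi>"
    unfolding orth_rep_def
  proof (intro conjI ballI impI)
    fix v assume v: "v \<in> V"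
    have "\<exists>e\<in>J. v \<in> e"
    proof (cases "v \<in> iso V E")
      case True thus ?thesis by (auto simp: J_def)
    next
      case False thus ?thesis using v by (auto simp: J_def iso_def)
    qed
    then obtain e where e: "e \<in> J" "v \<in> e" by blast
    obtain i where i: "i < card J" "h i = e" using h e(1) unfolding bij_betw_def by (metis atLeastLessThan_iff imageE)
    show "\<exists>i<card J. \<phi> v i \<noteq> 0" using i e by (intro exI[of _ i]) (simp add: \<phi>_def)
  next
    fix u v assume uv: "u \<in> V" "v \<in> V" "u \<noteq> v"
    have "(\<Sum>i<card J. \<phi> u i * \<phi> v i) = 0 \<longleftrightarrow> (\<forall>e\<in>J. \<not> (u \<in> e \<and> v \<in> e))"
      unfolding ipsum using fJ by (subst sum_nonneg_eq_0_iff) auto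
    also have "\<dots> \<longleftrightarrow> {u, v} \<notin> E"
    proof
      assume a: "\<forall>e\<in>J. \<not> (u \<in> e \<and> v \<in> e)"
      show "{u, v} \<notin> E" using a by (auto simp: J_def)
    next
      assume a: "{u, v} \<notin> E"
      show "\<forall>e\<in>J. \<not> (u \<in> e \<and> v \<in> e)"
      proof (intro ballI notI)
        fix e assume e: "e \<in> J" "u \<in> e \<and> v \<in> e"
        show False
        proof (cases "e \<in> E")
          case True
          then obtain x y where "e = {x, y}" using EV by blast
          hence "e = {u, v}" using e uv by auto
          thus False using a True by simp
        next
          case False
          then obtain x where "e = {x}" using e(1) by (auto simp: J_def)
          thus False using e uv by auto
        qed
      qed
    qed
    finally show "(\<Sum>i<card J. \<phi> u i * \<phi> v i) = 0 \<longleftrightarrow> {u, v} \<notin> E" .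
  qed
  thus ?thesis using cJ by auto
qed

lemma mvr_le:
  assumes "orth_rep V E d \<phi>" shows "mvr V E \<le> d"
  unfolding mvr_def using assms by (intro Least_le) blast

lemma mvr_rep:
  assumes fV: "finite V" and EV: "E \<subseteq> {{u, v} | u v. u \<in> V \<and> v \<in> V \<and> u \<noteq> v}"
  shows "\<exists>\<phi>. orth_rep V E (mvr V E) \<phi>"
proof -
  have "\<exists>d \<phi>. orth_rep V E d \<phi>" using construct_rep[OF assms] by blast
  thus ?thesis unfolding mvr_def by (rule LeastI_ex)
qed

lemma mvr_construct:
  assumes fV: "finite V" and EV: "E \<subseteq> {{u, v} | u v. u \<in> V \<and> v \<in> V \<and> u \<noteq> v}"
  shows "mvr V E \<le> card E + card (iso V E)"
  using construct_rep[OF assms] mvr_le by blast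

lemma tree_mvr: "is_tree V E \<Longrightarrow> card V - 1 \<le> mvr V E"
  using mvr_rep[of V E] tree_lower[of V E] unfolding is_tree_def graph_def by blast

lemma rep_restrict:
  assumes "orth_rep V E d \<phi>" "S \<subseteq> V" shows "orth_rep S (induced_edges E S) d \<phi>"
  using assms unfolding orth_rep_def induced_edges_def by (auto simp: subset_iff)

lemma mvr_mono:
  assumes fV: "finite V" and EV: "E \<subseteq> {{u, v} | u v. u \<in> V \<and> v \<in> V \<and> u \<noteq> v}" and S: "S \<subseteq> V"
  shows "mvr S (induced_edges E S) \<le> mvr V E"
  using mvr_rep[OF fV EV] rep_restrict[OF _ S] mvr_le by blast

lemma mvr_ge2:
  assumes rep: "orth_rep V E d \<phi>" and uv: "u \<in> V" "v \<in> V" "u \<noteq> v" "{u, v} \<notin> E"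
  shows "2 \<le> d"
proof (rule ccontr)
  assume "\<not> 2 \<le> d"
  hence d: "d = 0 \<or> d = 1" by auto
  have a: "\<exists>i<d. \<phi> u i \<noteq> 0" "\<exists>i<d. \<phi> v i \<noteq> 0" using rep uv by (auto simp: orth_rep_def)
  have "(\<Sum>i<d. \<phi> u i * \<phi> v i) = 0" using rep uv by (auto simp: orth_rep_def)
  thus False using d a by auto
qed


lemma cycle_from_deg2:
  assumes g: "graph V E" and FE: "F \<subseteq> E" and Fne: "F \<noteq> {}"
    and deg: "\<And>e x. e \<in> F \<Longrightarrow> x \<in> e \<Longrightarrow> \<exists>e'\<in>F. e' \<noteq> e \<and> x \<in> e'"
  shows "\<exists>c. is_cycle V E c"
proof -
  have fV: "finite V" using g by (simp add: graph_def)
  define P where "P = {p. distinct p \<and> walk V F p \<and> 2 \<le> length p}"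
  have "P \<subseteq> {xs. set xs \<subseteq> V \<and> length xs \<le> card V}"
  proof
    fix p assume "p \<in> P"
    hence "distinct p" "set p \<subseteq> V" by (auto simp: P_def walk_def)
    moreover have "card (set p) \<le> card V" using card_mono[OF fV] \<open>set p \<subseteq> V\<close> by blast
    ultimately show "p \<in> {xs. set xs \<subseteq> V \<and> length xs \<le> card V}"
      by (simp add: distinct_card)
  qed
  hence fP: "finite P" using finite_lists_length_le[OF fV] finite_subset by blast
  obtain e0 where e0: "e0 \<in> F" using Fne by blast
  obtain a b where ab: "e0 = {a, b}" "a \<in> V" "b \<in> V" "a \<noteq> b" using graph_edge2[OF g] FE e0 by blast
  have "[a, b] \<in> P" using ab e0 by (simp add: P_def walk_Cons2)
  hence Pne: "P \<noteq> {}" by blast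
  define M where "M = Max (length ` P)"
  have "M \<in> length ` P" unfolding M_def using fP Pne by (intro Max_in) auto
  then obtain p where p: "p \<in> P" "length p = M" by auto
  have maxp: "length q \<le> length p" if "q \<in> P" for q using fP that p(2) unfolding M_def by simp
  define k where "k = length p"
  have k2: "2 \<le> k" and dp: "distinct p" and wp: "walk V F p" using p(1) by (auto simp: P_def k_def)
  define x where "x = p ! (k - 1)"
  define y where "y = p ! (k - 2)"
  have "p \<noteq> []" using k2 by (auto simp: k_def)
  hence lastp: "last p = x" by (simp add: x_def k_def last_conv_nth)
  have yx: "{y, x} \<in> F"
  proof -
    have "Suc (k - 2) < length p" using k2 by (simp add: k_def)
    hence "{p ! (k - 2), p ! Suc (k - 2)} \<in> F" using wp unfolding walk_def by blast
    moreover have "Suc (k - 2) = k - 1" using k2 by simp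
    ultimately show ?thesis by (simp add: x_def y_def)
  qed
  obtain e' where e': "e' \<in> F" "e' \<noteq> {y, x}" "x \<in> e'" using deg[OF yx] by blast
  obtain z where z: "e' = {x, z}" using graph_edge2[OF g] FE e' by blast
  have zV: "z \<in> V" "z \<noteq> x" using graph_edge[OF g] FE e' z by auto
  have zy: "z \<noteq> y" using e' z by (auto simp: insert_commute)
  show ?thesis
  proof (cases "z \<in> set p")
    case False
    have "walk V F (p @ [z])" using walk_snoc[OF wp zV(1)] lastp e' z by simp
    hence "p @ [z] \<in> P" using False dp k2 by (simp add: P_def k_def)
    from maxp[OF this] show ?thesis by simp
  next
    case True
    then obtain j where j: "j < k" "p ! j = z" unfolding in_set_conv_nth k_def by blast
    have "j \<noteq> k - 1" using j zV x_def by auto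
    moreover have "j \<noteq> k - 2" using j zy y_def by auto
    ultimately have j3: "j + 3 \<le> k" using j k2 by linarith
    define c where "c = drop j p"
    have "length c \<ge> 3" using j3 by (simp add: c_def k_def)
    moreover have "distinct c" using dp by (simp add: c_def)
    moreover have "walk V E c"
      using walk_mono[OF walk_drop[OF wp, of j] _ FE] j by (simp add: c_def k_def)
    moreover have "hd c = z" using j by (simp add: c_def k_def hd_drop_conv_nth)
    moreover have "last c = x" using j lastp by (simp add: c_def k_def)
    moreover have "{x, z} \<in> E" using e' z FE by auto
    ultimately have "is_cycle V E c" by (simp add: is_cycle_def)
    thus ?thesis by blast
  qed
qed

lemma tree_edges:
  assumes tree: "is_tree V E"
  shows "card E \<le> card V - 1"
proof -
  have g: "graph V E" and nocyc: "\<not> (\<exists>c. is_cycle V E c)" using tree by (auto simp: is_tree_def)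
  have fV: "finite V" and ne: "V \<noteq> {}" using g by (auto simp: graph_def)
  have fE: "finite E" using graph_finite_E[OF g] .
  obtain r where r: "r \<in> V" using ne by blast
  define ab where "ab e = (SOME (x, y). e = {x, y} \<and> x \<noteq> y \<and> x \<in> V \<and> y \<in> V)" for e :: "'a set"
  have abp: "e = {fst (ab e), snd (ab e)} \<and> fst (ab e) \<noteq> snd (ab e) \<and> fst (ab e) \<in> V \<and> snd (ab e) \<in> V"
    if eE: "e \<in> E" for e
  proof -
    obtain x y where "e = {x, y} \<and> x \<noteq> y \<and> x \<in> V \<and> y \<in> V" using graph_edge2[OF g eE] by blast
    hence "\<exists>q. (\<lambda>(x, y). e = {x, y} \<and> x \<noteq> y \<and> x \<in> V \<and> y \<in> V) q" by blast
    hence "(\<lambda>(x, y). e = {x, y} \<and> x \<noteq> y \<and> x \<in> V \<and> y \<in> V) (ab e)" unfolding ab_def by (rule someI_ex)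
    thus ?thesis by (simp add: case_prod_beta)
  qed
  define \<delta> where "\<delta> x = (\<lambda>y. if y = x then (1::real) else 0)" for x :: 'a
  define w where "w e = \<delta> (fst (ab e)) - \<delta> (snd (ab e))" for e
  have w0: "w e x = 0" if "e \<in> E" "x \<notin> e" for e x
    using abp[OF that(1)] that(2) by (auto simp: w_def \<delta>_def)
  have wn0: "w e x \<noteq> 0" if "e \<in> E" "x \<in> e" for e x
    using abp[OF that(1)] that(2) by (auto simp: w_def \<delta>_def)
  define B where "B = (\<lambda>x. \<delta> x - \<delta> r) ` (V - {r})"
  have "card E \<le> card B"
  proof (rule indep_bound[of E B w])
    show "finite E" by fact
    show "finite B" using fV by (simp add: B_def)
    have inspan: "\<delta> x - \<delta> r \<in> fvs.span B" if "x \<in> V" for x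
    proof (cases "x = r")
      case True thus ?thesis using fvs.span_zero by simp
    next
      case False thus ?thesis using that by (intro fvs.span_base) (simp add: B_def)
    qed
    fix e assume e: "e \<in> E"
    have eq: "w e = (\<delta> (fst (ab e)) - \<delta> r) - (\<delta> (snd (ab e)) - \<delta> r)" by (simp add: w_def)
    show "w e \<in> fvs.span B" unfolding eq
      by (rule fvs.span_diff) (use inspan abp[OF e] in auto)
  next
    fix c assume h: "(\<Sum>e\<in>E. fscale (c e) (w e)) = 0"
    have hx: "(\<Sum>e\<in>E. c e * w e x) = 0" for x
    proof -
      have "(\<Sum>e\<in>E. fscale (c e) (w e)) x = 0" using h by simp
      thus ?thesis by (simp add: sum_fun_apply fscale_def)
    qed
    show "\<forall>e\<in>E. c e = 0"
    proof (rule ccontr)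
      assume "\<not> (\<forall>e\<in>E. c e = 0)"
      define F where "F = {e \<in> E. c e \<noteq> 0}"
      have "F \<noteq> {}" using \<open>\<not> (\<forall>e\<in>E. c e = 0)\<close> by (auto simp: F_def)
      moreover have "\<exists>e'\<in>F. e' \<noteq> e \<and> x \<in> e'" if eF: "e \<in> F" and xe: "x \<in> e" for e x
      proof (rule ccontr)
        assume nn: "\<not> (\<exists>e'\<in>F. e' \<noteq> e \<and> x \<in> e')"
        have eE: "e \<in> E" and ce: "c e \<noteq> 0" using eF by (auto simp: F_def)
        have "(\<Sum>e\<in>E. c e * w e x) = c e * w e x + (\<Sum>e''\<in>E - {e}. c e'' * w e'' x)"
          using sum.remove[OF fE eE] by simp
        also have "(\<Sum>e''\<in>E - {e}. c e'' * w e'' x) = 0"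
        proof (intro sum.neutral ballI)
          fix e'' assume e'': "e'' \<in> E - {e}"
          show "c e'' * w e'' x = 0"
          proof (cases "c e'' = 0")
            case False
            hence "e'' \<in> F" using e'' by (simp add: F_def)
            hence "x \<notin> e''" using nn e'' by blast
            thus ?thesis using w0 e'' by simp
          qed simp
        qed
        finally have "c e * w e x = 0" using hx by simp
        thus False using ce wn0[OF eE xe] by simp
      qed
      ultimately have "\<exists>c. is_cycle V E c" using cycle_from_deg2[OF g, of F] by (auto simp: F_def)
      thus False using nocyc by blast
    qed
  qed
  moreover have "card B \<le> card V - 1"
    unfolding B_def using card_image_le[of "V - {r}" "\<lambda>x. \<delta> x - \<delta> r"] fV r by simp
  ultimately show ?thesis by simp
qed


lemma induced_induced: "S \<subseteq> W \<Longrightarrow> induced_edges (induced_edges E W) S = induced_edges E S"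
  by (auto simp: induced_edges_def)

lemma comp_induced:
  assumes "S \<subseteq> V"
  shows "complement_edges S (induced_edges E S) = induced_edges (complement_edges V E) S"
proof
  show "complement_edges S (induced_edges E S) \<subseteq> induced_edges (complement_edges V E) S"
    using assms by (fastforce simp: complement_edges_def induced_edges_def)
next
  show "induced_edges (complement_edges V E) S \<subseteq> complement_edges S (induced_edges E S)"
  proof
    fix e assume "e \<in> induced_edges (complement_edges V E) S"
    then obtain u v where e: "e = {u, v}" "u \<in> V" "v \<in> V" "u \<noteq> v" "{u, v} \<notin> E" "e \<subseteq> S"
      by (auto simp: complement_edges_def induced_edges_def)
    thus "e \<in> complement_edges S (induced_edges E S)"
      unfolding complement_edges_def induced_edges_def by blast
  qed
qed

lemma induced_pairs:
  "E \<subseteq> {{u, v} | u v. u \<in> V \<and> v \<in> V \<and> u \<noteq> v} \<Longrightarrow>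
   induced_edges E W \<subseteq> {{u, v} | u v. u \<in> W \<and> v \<in> W \<and> u \<noteq> v}"
proof
  fix e assume EV: "E \<subseteq> {{u, v} | u v. u \<in> V \<and> v \<in> V \<and> u \<noteq> v}" and e: "e \<in> induced_edges E W"
  then obtain u v where "e = {u, v}" "u \<noteq> v" "e \<subseteq> W" by (auto simp: induced_edges_def)
  thus "e \<in> {{u, v} | u v. u \<in> W \<and> v \<in> W \<and> u \<noteq> v}" by blast
qed

lemma comp_pairs: "complement_edges V E \<subseteq> {{u, v} | u v. u \<in> V \<and> v \<in> V \<and> u \<noteq> v}"
  by (auto simp: complement_edges_def)

lemma vertex_cases:
  assumes tree: "is_tree V E" and v: "v \<in> V" and w: "w \<in> V" "w \<noteq> v"
  shows "card (induced_edges E (V - {v})) + card (iso (V - {v}) (induced_edges E (V - {v}))) < card E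
    \<or> (is_star V E \<and> induced_edges E (V - {v}) = {} \<and> (\<forall>u\<in>V. u \<noteq> v \<longrightarrow> {v, u} \<in> E))"
proof -
  have g: "graph V E" and con: "connected_graph V E" using tree by (auto simp: is_tree_def)
  have fV: "finite V" using g by (simp add: graph_def)
  have fE: "finite E" using graph_finite_E[OF g] .
  have EV: "\<And>e. e \<in> E \<Longrightarrow> e \<subseteq> V" using g unfolding graph_def by blast
  define W where "W = V - {v}"
  define E' where "E' = induced_edges E W"
  define I where "I = iso W E'"
  define N where "N = {u \<in> V. {v, u} \<in> E}"
  define Ev where "Ev = {e \<in> E. v \<in> e}"
  have E'eq: "E' = {e \<in> E. v \<notin> e}" using EV by (auto simp: E'_def induced_edges_def W_def)
  have cardE: "card E = card E' + card Ev"
  proof -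
    have "E = E' \<union> Ev" "E' \<inter> Ev = {}" by (auto simp: E'eq Ev_def)
    thus ?thesis using fE by (metis card_Un_disjoint finite_Un)
  qed
  have Iin: "\<And>x y. x \<in> I \<Longrightarrow> {x, y} \<in> E \<Longrightarrow> y = v"
  proof (rule ccontr)
    fix x y assume xy: "x \<in> I" "{x, y} \<in> E" "y \<noteq> v"
    have "x \<in> W" using xy(1) by (simp add: I_def iso_def)
    hence "{x, y} \<in> E'" using xy EV by (auto simp: E'eq W_def)
    thus False using xy(1) by (auto simp: I_def iso_def)
  qed
  have IN: "I \<subseteq> N"
  proof
    fix u assume uI: "u \<in> I"
    hence uV: "u \<in> V" "u \<noteq> v" by (auto simp: I_def iso_def W_def)
    obtain q where q: "walk V E q" "hd q = u" "last q = v" using con uV v unfolding connected_graph_def by blast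
    have "\<not> (\<forall>x y. x \<in> {u} \<longrightarrow> {x, y} \<in> E \<longrightarrow> y \<in> {u})"
    proof
      assume "\<forall>x y. x \<in> {u} \<longrightarrow> {x, y} \<in> E \<longrightarrow> y \<in> {u}"
      hence "last q \<in> {u}" using walk_closed[OF q(1), of "{u}"] q(2) by blast
      thus False using q(3) uV by simp
    qed
    then obtain y where "{u, y} \<in> E" by blast
    moreover have "y = v" using Iin[OF uI] calculation by blast
    ultimately show "u \<in> N" using uV by (simp add: N_def insert_commute)
  qed
  show ?thesis
  proof (cases "I = N")
    case False
    hence lt: "card I < card N" using IN fV by (intro psubset_card_mono) (auto simp: N_def)
    have "inj_on (\<lambda>u. {v, u}) N" using graph_edge[OF g] by (auto simp: inj_on_def N_def doubleton_eq_iff)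
    hence "card N = card ((\<lambda>u. {v, u}) ` N)" by (simp add: card_image)
    also have "\<dots> \<le> card Ev" using fE by (intro card_mono) (auto simp: Ev_def N_def)
    finally have "card I < card Ev" using lt by simp
    hence "card E' + card I < card E" using cardE by simp
    thus ?thesis by (simp add: E'_def I_def W_def)
  next
    case True
    have allN: "{v, u} \<in> E" if uV: "u \<in> V" "u \<noteq> v" for u
    proof -
      obtain q where q: "walk V E q" "hd q = v" "last q = u" using con uV v unfolding connected_graph_def by blast
      have cl: "\<And>x y. x \<in> insert v I \<Longrightarrow> {x, y} \<in> E \<Longrightarrow> y \<in> insert v I"
      proof -
        fix x y assume xy: "x \<in> insert v I" "{x, y} \<in> E"
        show "y \<in> insert v I"
        proof (cases "x = v")
          case True thus ?thesis using xy graph_edge[OF g xy(2)] \<open>I = N\<close> by (auto simp: N_def)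
        next
          case False thus ?thesis using xy Iin by auto
        qed
      qed
      have "u \<in> insert v I" using walk_closed[OF q(1), of "insert v I"] q cl by auto
      thus ?thesis using uV \<open>I = N\<close> by (auto simp: N_def)
    qed
    have E'0: "E' = {}"
    proof (rule ccontr)
      assume "E' \<noteq> {}"
      then obtain e where e: "e \<in> E'" by blast
      hence eE: "e \<in> E" "v \<notin> e" by (auto simp: E'eq)
      obtain a b where ab: "e = {a, b}" "a \<in> V" "b \<in> V" "a \<noteq> b" using graph_edge2[OF g eE(1)] by blast
      have "a \<noteq> v" using eE ab by auto
      hence "a \<in> N" using allN ab by (simp add: N_def)
      hence "a \<in> I" using \<open>I = N\<close> by simp
      thus False using e ab by (auto simp: I_def iso_def)
    qed
    have "is_star V E"
      unfolding is_star_def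
    proof (intro conjI bexI[OF _ v])
      show "graph V E" by fact
      show "E = {{v, u} |u. u \<in> V \<and> u \<noteq> v}"
      proof
        show "E \<subseteq> {{v, u} |u. u \<in> V \<and> u \<noteq> v}"
        proof
          fix e assume eE: "e \<in> E"
          have "v \<in> e" using E'0 eE by (auto simp: E'eq)
          moreover obtain a b where "e = {a, b}" "a \<in> V" "b \<in> V" "a \<noteq> b" using graph_edge2[OF g eE] by blast
          ultimately show "e \<in> {{v, u} |u. u \<in> V \<and> u \<noteq> v}" by (auto simp: insert_commute)
        qed
        show "{{v, u} |u. u \<in> V \<and> u \<noteq> v} \<subseteq> E" using allN by auto
      qed
    qed
    thus ?thesis using E'0 allN by (simp add: E'_def W_def)
  qed
qed

theorem proposition5p2:
  fixes V :: "'a set" and E :: "'a set set"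
  assumes "is_tree V E"
  shows "complement_critical V E \<and> (\<not> is_star V E \<longrightarrow> vector_critical V E)"
proof -
  have tree: "is_tree V E" by fact
  have g: "graph V E" using tree by (simp add: is_tree_def)
  have fV: "finite V" using g by (simp add: graph_def)
  have EV: "E \<subseteq> {{u, v} | u v. u \<in> V \<and> v \<in> V \<and> u \<noteq> v}" using g by (simp add: graph_def)
  have lowT: "card V - 1 \<le> mvr V E" using tree_mvr[OF tree] .
  have edgesT: "card E \<le> card V - 1" using tree_edges[OF tree] .
  have key: "mvr S (induced_edges E S) < mvr V E
     \<or> (induced_edges E S = {} \<and> (\<exists>v w. v \<in> V \<and> w \<in> V \<and> v \<noteq> w \<and> {v, w} \<in> E) \<and> is_star V E)"
    if S: "S \<subset> V" "S \<noteq> {}" for S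
  proof -
    obtain v where v: "v \<in> V" "v \<notin> S" using S by blast
    obtain w where w: "w \<in> S" using S by blast
    have wV: "w \<in> V" "w \<noteq> v" using w v S by auto
    define W where "W = V - {v}"
    have SW: "S \<subseteq> W" using S v by (auto simp: W_def)
    have fW: "finite W" using fV by (simp add: W_def)
    have EW: "induced_edges E W \<subseteq> {{u, v} | u v. u \<in> W \<and> v \<in> W \<and> u \<noteq> v}"
      using induced_pairs[OF EV] .
    have monoS: "mvr S (induced_edges E S) \<le> mvr W (induced_edges E W)"
      using mvr_mono[OF fW EW SW] induced_induced[OF SW] by simp
    from vertex_cases[OF tree v(1) wV] show ?thesis
    proof
      assume lt: "card (induced_edges E (V - {v})) + card (iso (V - {v}) (induced_edges E (V - {v}))) < card E"
      have "mvr W (induced_edges E W) < card E"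
        using mvr_construct[OF fW EW] lt by (simp add: W_def)
      thus ?thesis using monoS edgesT lowT by simp
    next
      assume st: "is_star V E \<and> induced_edges E (V - {v}) = {} \<and> (\<forall>u\<in>V. u \<noteq> v \<longrightarrow> {v, u} \<in> E)"
      have "induced_edges E S = {}"
        using st SW unfolding W_def induced_edges_def by blast
      moreover have "{v, w} \<in> E" using st wV by blast
      ultimately show ?thesis using st v wV by blast
    qed
  qed
  have cc: "complement_critical V E"
    unfolding complement_critical_def
  proof (intro allI impI, elim conjE)
    fix S assume S: "S \<subset> V" "S \<noteq> {}"
    have SV: "S \<subseteq> V" using S by blast
    have fS: "finite S" using fV SV finite_subset by blast
    have compS: "mvr S (complement_edges S (induced_edges E S)) \<le> mvr V (complement_edges V E)"
      using mvr_mono[OF fV comp_pairs SV] comp_induced[OF SV] by simp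
    from key[OF S] show "mvr S (induced_edges E S) + mvr S (complement_edges S (induced_edges E S))
          < mvr V E + mvr V (complement_edges V E)"
    proof
      assume "mvr S (induced_edges E S) < mvr V E"
      thus ?thesis using compS by simp
    next
      assume st: "induced_edges E S = {} \<and> (\<exists>v w. v \<in> V \<and> w \<in> V \<and> v \<noteq> w \<and> {v, w} \<in> E) \<and> is_star V E"
      then obtain v w where vw: "v \<in> V" "w \<in> V" "v \<noteq> w" "{v, w} \<in> E" by blast
      have ind0: "induced_edges E S = {}" using st by blast
      have "mvr S {} \<le> card ({}::'a set set) + card (iso S {})"
        using mvr_construct[OF fS, of "{}"] by simp
      also have "\<dots> \<le> card S" using fS by (simp add: iso_def)
      also have "\<dots> < card V" using S fV by (simp add: psubset_card_mono)
      finally have m1: "mvr S (induced_edges E S) \<le> mvr V E" using ind0 lowT by simp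
      have "orth_rep S (complement_edges S {}) 1 (\<lambda>_ _. 1)"
        unfolding orth_rep_def complement_edges_def by auto
      hence m2: "mvr S (complement_edges S (induced_edges E S)) \<le> 1" using ind0 mvr_le by metis
      obtain \<psi> where \<psi>: "orth_rep V (complement_edges V E) (mvr V (complement_edges V E)) \<psi>"
        using mvr_rep[OF fV comp_pairs] by blast
      have "{v, w} \<notin> complement_edges V E" using vw(4) by (auto simp: complement_edges_def)
      hence "2 \<le> mvr V (complement_edges V E)" using mvr_ge2[OF \<psi> vw(1,2,3)] by blast
      thus ?thesis using m1 m2 by simp
    qed
  qed
  have vc: "\<not> is_star V E \<longrightarrow> vector_critical V E"
  proof
    assume ns: "\<not> is_star V E"
    show "vector_critical V E"
      unfolding vector_critical_def
    proof (intro allI impI, elim conjE)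
      fix S assume S: "S \<subset> V" "S \<noteq> {}"
      from key[OF S] ns show "mvr S (induced_edges E S) < mvr V E" by blast
    qed
  qed
  from cc vc show ?thesis by blast
qed


end
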